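(* Let $L=10^6$, $\rho\le L^{-16}$, and let $\xi=(\xi_i)_{i\in\mathbb{Z}}$ be i.i.d. with $\mathbb{P}(\xi_i\ge n)=\rho^n$ for $n\in\{0,1,2,\dots\}$. With the labels $H_m$ defined below from $\xi$, let $p_k=\mathbb{P}[(k,0)\text{ is bad}]$. Then $p_k\le L^{-k/2}$ for every $k\ge0$.
   Context: Let $L_k=L^k$. For $k\ge0$ and $i\in\mathbb{Z}$ let $I_{(k,i)}=[iL_k,(i+1)L_k)\cap\mathbb{Z}$ and $M_k=\{k\}\times\mathbb{Z}$. For $m=(k+1,i)\in M_{k+1}$ let $\mathcal{Q}_m=\{(k,iL+j):0\le j\le L-1\}$. Define $H_m$ recursively: $H_{(0,i)}=\xi_i$; for $m\in M_{k+1}$, $H_m=0$ if every $m'\in\mathcal{Q}_m$ is good; $H_m=H_{m_1}-1$ if $m_1$ is the only bad element of $\mathcal{Q}_m$; $H_m=1+\sum_{i=1}^r H_{m_i}$ if $m_1,\dots,m_r$ with $r\ge2$ are the bad elements of $\mathcal{Q}_m$. Here $m$ is called good if $H_m=0$ and bad otherwise. *)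

theory Defs
  imports "HOL-Probability.Probability"
begin

text \<open>Labels H_m for m = (k,i), computed from a configuration xi :: int => nat,
  with block size L (so L_k = L^k). The children of (k+1,i) are (k, i*L + j), 0 <= j <= L-1.\<close>

primrec Hlab :: "nat \<Rightarrow> nat \<Rightarrow> int \<Rightarrow> (int \<Rightarrow> nat) \<Rightarrow> int" where
  "Hlab L 0 i xi = int (xi i)"
| "Hlab L (Suc k) i xi =
     (let B = {j \<in> {0..<int L}. Hlab L k (i * int L + j) xi \<noteq> 0} in
      if B = {} then 0
      else if card B = 1 then Hlab L k (i * int L + the_elem B) xi - 1
      else 1 + (\<Sum>j\<in>B. Hlab L k (i * int L + j) xi))"

definition bad :: "nat \<Rightarrow> nat \<Rightarrow> int \<Rightarrow> (int \<Rightarrow> nat) \<Rightarrow> bool" where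
  "bad L k i xi \<longleftrightarrow> Hlab L k i xi \<noteq> 0"

end

theory Submission
  imports Defs
begin


definition blk :: "nat \<Rightarrow> nat \<Rightarrow> int \<Rightarrow> int set" where
  "blk L k i = {i * int L ^ k ..< (i+1) * int L ^ k}"

lemma blk_child:
  assumes "0 \<le> j" "j < int L"
  shows "blk L k (i * int L + j) \<subseteq> blk L (Suc k) i"
proof
  fix x assume "x \<in> blk L k (i * int L + j)"
  then have x: "(i * int L + j) * int L ^ k \<le> x" "x < (i * int L + j + 1) * int L ^ k"
    by (auto simp: blk_def)
  have p: "0 \<le> int L ^ k" by simp
  have "(i * int L + j) * int L ^ k = i * int L ^ Suc k + j * int L ^ k"
    by (simp add: algebra_simps)
  moreover have "0 \<le> j * int L ^ k" using assms p by simp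
  ultimately have a: "i * int L ^ Suc k \<le> x" using x by linarith
  have "(i * int L + j + 1) * int L ^ k \<le> (i * int L + int L) * int L ^ k"
    using assms p by (intro mult_right_mono) auto
  also have "\<dots> = (i+1) * int L ^ Suc k" by (simp add: algebra_simps)
  finally show "x \<in> blk L (Suc k) i" using a x by (auto simp: blk_def)
qed

lemma blk_disj:
  assumes "L > 0" "a \<noteq> b"
  shows "blk L k a \<inter> blk L k b = {}"
proof -
  have p: "0 < int L ^ k" using assms by simp
  { fix a b :: int assume "a < b"
    then have "(a+1) * int L ^ k \<le> b * int L ^ k" using p by (intro mult_right_mono) auto
    then have "blk L k a \<inter> blk L k b = {}" by (auto simp: blk_def) }
  then show ?thesis using assms(2) by (metis Int_commute linorder_neqE)
qed

lemma Hlab_local: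
  assumes "\<forall>x\<in>blk L k i. xi x = xi' x"
  shows "Hlab L k i xi = Hlab L k i xi'"
  using assms
proof (induction k arbitrary: i)
  case 0 then show ?case by (simp add: blk_def)
next
  case (Suc k)
  have eq: "\<forall>j\<in>{0..<int L}. Hlab L k (i*int L + j) xi = Hlab L k (i*int L+j) xi'"
  proof
    fix j assume j: "j \<in> {0..<int L}"
    show "Hlab L k (i*int L + j) xi = Hlab L k (i*int L+j) xi'"
      using Suc.prems blk_child[of j L k i] j by (intro Suc.IH) auto
  qed
  define B where "B = {j \<in> {0..<int L}. Hlab L k (i * int L + j) xi \<noteq> 0}"
  have B': "B = {j \<in> {0..<int L}. Hlab L k (i * int L + j) xi' \<noteq> 0}"
    using eq by (auto simp: B_def)
  have s: "(\<Sum>j\<in>B. Hlab L k (i * int L + j) xi) = (\<Sum>j\<in>B. Hlab L k (i * int L + j) xi')"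
    using eq by (intro sum.cong) (auto simp: B_def)
  have t: "Hlab L k (i * int L + the_elem B) xi = Hlab L k (i * int L + the_elem B) xi'" if c: "card B = 1"
  proof -
    obtain j where j: "B = {j}" using c by (rule card_1_singletonE)
    then have "j \<in> {0..<int L}" by (auto simp: B_def)
    then show ?thesis using eq j by simp
  qed
  show ?case
    unfolding Hlab.simps Let_def B_def[symmetric] B'[symmetric] using s t by simp
qed

lemma Hlab_nonneg: "0 \<le> Hlab L k i xi"
proof (induction k arbitrary: i)
  case 0 then show ?case by simp
next
  case (Suc k)
  define B where "B = {j \<in> {0..<int L}. Hlab L k (i * int L + j) xi \<noteq> 0}"
  have "card B = 1 \<Longrightarrow> 0 \<le> Hlab L k (i * int L + the_elem B) xi - 1"
  proof -
    assume "card B = 1"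
    then obtain j where "B = {j}" by (rule card_1_singletonE)
    then have "Hlab L k (i * int L + j) xi \<noteq> 0" by (auto simp: B_def)
    with Suc.IH[of "i * int L + j"] \<open>B = {j}\<close> show ?thesis by simp
  qed
  moreover have "0 \<le> (\<Sum>j\<in>B. Hlab L k (i * int L + j) xi)"
    using Suc.IH by (intro sum_nonneg) auto
  ultimately show ?case
    unfolding Hlab.simps Let_def B_def[symmetric] by simp
qed

lemma meas_any_fin:
  fixes G :: "(int \<Rightarrow> nat) \<Rightarrow> int"
  assumes "finite K"
  shows "G \<in> measurable (PiM K (\<lambda>_. count_space UNIV)) (count_space UNIV)"
proof (subst measurable_count_space_eq2_countable, safe)
  fix a
  let ?P = "PiM K (\<lambda>_. count_space (UNIV::nat set))"
  let ?S = "G -` {a} \<inter> space ?P"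
  show "?S \<in> sets ?P"
  proof (rule sets.countable)
    fix y assume "y \<in> ?S"
    then have y: "y \<in> PiE K (\<lambda>_. UNIV)" by (simp add: space_PiM)
    have "{y} = PiE K (\<lambda>i. {y i})" using y
      by (auto simp: PiE_def extensional_def Pi_def fun_eq_iff) metis
    then show "{y} \<in> sets ?P" using assms by simp
  next
    have "countable (PiE K (\<lambda>_. (UNIV::nat set)))" using assms by (intro countable_PiE) auto
    then show "countable ?S" by (rule countable_subset[rotated]) (auto simp: space_PiM)
  qed
qed simp

context prob_space begin

lemma H_rv:
  assumes "\<And>i. \<xi> i \<in> measurable M (count_space UNIV)"
  shows "(\<lambda>\<omega>. Hlab L k i (\<lambda>x. \<xi> x \<omega>)) \<in> measurable M (count_space UNIV)"
proof -
  have "(\<lambda>\<omega>. Hlab L k i (\<lambda>x. \<xi> x \<omega>)) = (\<lambda>y. Hlab L k i y) \<circ> (\<lambda>\<omega>. restrict (\<lambda>x. \<xi> x \<omega>) (blk L k i))"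
    by (auto intro!: Hlab_local simp: fun_eq_iff)
  also have "\<dots> \<in> measurable M (count_space UNIV)"
    by (rule measurable_comp[OF measurable_restrict meas_any_fin]) (auto simp: assms blk_def)
  finally show ?thesis .
qed

lemma H_indep:
  assumes "L > 0" "indep_vars (\<lambda>_. count_space UNIV) \<xi> UNIV"
  shows "indep_vars (\<lambda>_. count_space UNIV) (\<lambda>a \<omega>. Hlab L k a (\<lambda>x. \<xi> x \<omega>)) UNIV"
proof -
  have "indep_vars (\<lambda>j. PiM (blk L k j) (\<lambda>_. count_space UNIV)) (\<lambda>j \<omega>. restrict (\<lambda>i. \<xi> i \<omega>) (blk L k j)) UNIV"
    using assms blk_disj by (intro indep_vars_restrict) (auto simp: disjoint_family_on_def)
  then have "indep_vars (\<lambda>_. count_space UNIV) (\<lambda>j \<omega>. Hlab L k j (restrict (\<lambda>i. \<xi> i \<omega>) (blk L k j))) UNIV"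
    by (rule indep_vars_compose2) (auto intro: meas_any_fin simp: blk_def)
  moreover have "(\<lambda>j \<omega>. Hlab L k j (restrict (\<lambda>i. \<xi> i \<omega>) (blk L k j))) = (\<lambda>a \<omega>. Hlab L k a (\<lambda>x. \<xi> x \<omega>))"
    by (auto intro!: Hlab_local simp: fun_eq_iff)
  ultimately show ?thesis by simp
qed

end


lemma Hlab_Suc_C:
  fixes L k i xi
  defines "C \<equiv> {i * int L ..< i * int L + int L}"
  defines "B0 \<equiv> {a \<in> C. Hlab L k a xi \<noteq> 0}"
  shows "B0 = {} \<Longrightarrow> Hlab L (Suc k) i xi = 0"
    and "B0 = {a} \<Longrightarrow> Hlab L (Suc k) i xi = Hlab L k a xi - 1"
    and "2 \<le> card B0 \<Longrightarrow> Hlab L (Suc k) i xi = 1 + (\<Sum>a\<in>B0. Hlab L k a xi)"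
proof -
  define B where "B = {j \<in> {0..<int L}. Hlab L k (i * int L + j) xi \<noteq> 0}"
  have H: "Hlab L (Suc k) i xi = (if B = {} then 0
      else if card B = 1 then Hlab L k (i * int L + the_elem B) xi - 1
      else 1 + (\<Sum>j\<in>B. Hlab L k (i * int L + j) xi))"
    unfolding Hlab.simps Let_def B_def ..
  have inj: "inj ((+) (i * int L))" by (auto simp: inj_def)
  have img: "B0 = (+) (i * int L) ` B"
  proof -
    have "C = (+) (i * int L) ` {0..<int L}" unfolding C_def
      by (auto simp: image_iff intro!: bexI[of _ "x - i * int L" for x])
    then show ?thesis unfolding B0_def B_def
      apply (intro set_eqI iffI)
       apply (clarsimp simp: image_iff)
       apply (rule_tac x="x - i * int L" in exI)
       apply auto
      done
  qed
  have cardeq: "card B0 = card B" unfolding img by (rule card_image) (rule inj_on_subset[OF inj], simp)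
  show "B0 = {} \<Longrightarrow> Hlab L (Suc k) i xi = 0" using H img by simp
  show "B0 = {a} \<Longrightarrow> Hlab L (Suc k) i xi = Hlab L k a xi - 1"
  proof -
    assume a: "B0 = {a}"
    have im: "(+) (i * int L) ` B = {a}" using img a by simp
    have "B = {a - i * int L}"
    proof (intro set_eqI iffI)
      fix x assume "x \<in> B"
      then have "i * int L + x \<in> {a}" using im by blast
      then show "x \<in> {a - i * int L}" by simp
    next
      fix x assume x: "x \<in> {a - i * int L}"
      obtain y where "y \<in> B" "a = i * int L + y" using im by (metis imageE singletonI)
      then show "x \<in> B" using x by simp
    qed
    then show ?thesis using H by simp
  qed
  show "2 \<le> card B0 \<Longrightarrow> Hlab L (Suc k) i xi = 1 + (\<Sum>a\<in>B0. Hlab L k a xi)"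
  proof -
    assume c: "2 \<le> card B0"
    then have "B \<noteq> {}" "card B \<noteq> 1" using cardeq by auto
    then have "Hlab L (Suc k) i xi = 1 + (\<Sum>j\<in>B. Hlab L k (i * int L + j) xi)" using H by simp
    also have "(\<Sum>j\<in>B. Hlab L k (i * int L + j) xi) = (\<Sum>a\<in>B0. Hlab L k a xi)"
      unfolding img by (subst sum.reindex) (auto intro: inj_on_subset[OF inj])
    finally show ?thesis .
  qed
qed

definition phi :: "real \<Rightarrow> int \<Rightarrow> real" where
  "phi lam h = (if 1 \<le> h then lam ^ nat h else 0)"

lemma phi_nonneg: "0 \<le> lam \<Longrightarrow> 0 \<le> phi lam h"
  by (simp add: phi_def)

lemma pointwise:
  fixes lam :: real and L k i xi
  assumes lam: "1 \<le> lam"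
  defines "C \<equiv> {i * int L ..< i * int L + int L}"
  shows "phi lam (Hlab L (Suc k) i xi) \<le> (\<Sum>a\<in>C. phi lam (Hlab L k a xi)) / lam
     + lam * (\<Sum>S\<in>{S\<in>Pow C. 2 \<le> card S}. \<Prod>a\<in>S. phi lam (Hlab L k a xi))"
proof -
  define h where "h a = Hlab L k a xi" for a
  define B0 where "B0 = {a \<in> C. h a \<noteq> 0}"
  have fin: "finite C" by (simp add: C_def)
  have pn: "\<And>a. 0 \<le> phi lam (h a)" using lam by (intro phi_nonneg) simp
  have s1: "0 \<le> (\<Sum>a\<in>C. phi lam (h a)) / lam" using pn lam by (intro divide_nonneg_pos sum_nonneg) auto
  have s2: "0 \<le> lam * (\<Sum>S\<in>{S\<in>Pow C. 2 \<le> card S}. \<Prod>a\<in>S. phi lam (h a))"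
    using pn lam by (intro mult_nonneg_nonneg sum_nonneg prod_nonneg) auto
  have "phi lam (Hlab L (Suc k) i xi) \<le> (\<Sum>a\<in>C. phi lam (h a)) / lam
     + lam * (\<Sum>S\<in>{S\<in>Pow C. 2 \<le> card S}. \<Prod>a\<in>S. phi lam (h a))"
  proof (cases "B0 = {}")
    case True
    then have "Hlab L (Suc k) i xi = 0" using Hlab_Suc_C(1)[of i L k xi] by (simp add: B0_def h_def C_def)
    then show ?thesis using s1 s2 by (simp add: phi_def)
  next
    case False
    show ?thesis
    proof (cases "card B0 = 1")
      case True
      then obtain a where a: "B0 = {a}" by (rule card_1_singletonE)
      then have aC: "a \<in> C" and ha: "h a \<noteq> 0" by (auto simp: B0_def)
      have ha1: "1 \<le> h a" using ha Hlab_nonneg[of L k a xi] by (simp add: h_def)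
      have H: "Hlab L (Suc k) i xi = h a - 1" using Hlab_Suc_C(2)[of i L k xi a] a by (simp add: B0_def h_def C_def)
      have "phi lam (Hlab L (Suc k) i xi) \<le> phi lam (h a) / lam"
      proof (cases "2 \<le> h a")
        case True
        then have "nat (h a) = Suc (nat (h a - 1))" by simp
        then show ?thesis using H True lam by (simp add: phi_def)
      next
        case False
        then show ?thesis using H pn[of a] lam by (simp add: phi_def)
      qed
      also have "\<dots> \<le> (\<Sum>a\<in>C. phi lam (h a)) / lam"
        using lam pn aC fin by (intro divide_right_mono member_le_sum) auto
      finally show ?thesis using s2 by simp
    next
      case False
      have fB: "finite B0" using fin by (simp add: B0_def)
      then have c2: "2 \<le> card B0" using False \<open>B0 \<noteq> {}\<close> by (cases "card B0") auto
      have H: "Hlab L (Suc k) i xi = 1 + (\<Sum>a\<in>B0. h a)" using Hlab_Suc_C(3)[of i L k xi] c2 by (simp add: B0_def h_def C_def)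
      have hpos: "1 \<le> h a" if "a \<in> B0" for a using that Hlab_nonneg[of L k a xi] by (simp add: B0_def h_def)
      have e: "(\<Sum>a\<in>B0. h a) = int (\<Sum>a\<in>B0. nat (h a))" using hpos by (auto simp: of_nat_sum intro!: sum.cong) (meson order_trans zero_le_one)
      have "nat (Hlab L (Suc k) i xi) = Suc (\<Sum>a\<in>B0. nat (h a))" unfolding H e by (simp only: of_nat_Suc[symmetric] nat_int)
      then have "phi lam (Hlab L (Suc k) i xi) = lam * (\<Prod>a\<in>B0. lam ^ nat (h a))"
        using H by (simp add: phi_def power_sum)
      also have "\<dots> = lam * (\<Prod>a\<in>B0. phi lam (h a))"
        using hpos by (simp add: phi_def)
      also have "\<dots> \<le> lam * (\<Sum>S\<in>{S\<in>Pow C. 2 \<le> card S}. \<Prod>a\<in>S. phi lam (h a))"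
        using pn lam fin c2 by (intro mult_left_mono member_le_sum prod_nonneg) (auto simp: B0_def)
      finally show ?thesis using s1 by simp
    qed
  qed
  then show ?thesis by (simp add: h_def)
qed



context prob_space begin

lemma Y_meas:
  assumes "\<And>i. \<xi> i \<in> measurable M (count_space UNIV)"
  shows "(\<lambda>\<omega>. ennreal (phi lam (Hlab L k a (\<lambda>x. \<xi> x \<omega>)))) \<in> borel_measurable M"
  by (rule measurable_compose[OF H_rv[OF assms]]) simp

lemma Y_indep:
  assumes "L > 0" "indep_vars (\<lambda>_. count_space UNIV) \<xi> UNIV"
  shows "indep_vars (\<lambda>_. borel) (\<lambda>a \<omega>. ennreal (phi lam (Hlab L k a (\<lambda>x. \<xi> x \<omega>)))) UNIV"
  using indep_vars_compose2[OF H_indep[OF assms, of k], of "\<lambda>_ h. ennreal (phi lam h)" "\<lambda>_. borel"]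
  by simp

lemma step:
  assumes rv: "\<And>i. \<xi> i \<in> measurable M (count_space UNIV)"
    and ind: "indep_vars (\<lambda>_. count_space UNIV) \<xi> UNIV"
    and L: "L > 0" and lam: "1 \<le> lam" and e: "0 \<le> e"
    and IH: "\<And>a. (\<integral>\<^sup>+\<omega>. ennreal (phi lam (Hlab L k a (\<lambda>x. \<xi> x \<omega>))) \<partial>M) \<le> ennreal e"
  shows "(\<integral>\<^sup>+\<omega>. ennreal (phi lam (Hlab L (Suc k) i (\<lambda>x. \<xi> x \<omega>))) \<partial>M)
     \<le> ennreal (real L * e / lam + lam * (\<Sum>S\<in>{S\<in>Pow {i * int L ..< i * int L + int L}. 2 \<le> card S}. e ^ card S))"
proof -
  define C where "C = {i * int L ..< i * int L + int L}"
  define P2 where "P2 = {S\<in>Pow C. 2 \<le> card S}"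
  define Y where "Y a \<omega> = ennreal (phi lam (Hlab L k a (\<lambda>x. \<xi> x \<omega>)))" for a \<omega>
  have finC: "finite C" by (simp add: C_def)
  have cardC: "card C = L" by (simp add: C_def)
  have finP2: "finite P2" using finC by (simp add: P2_def)
  have Ym: "\<And>a. Y a \<in> borel_measurable M" unfolding Y_def by (rule Y_meas[OF rv])
  have Yi: "indep_vars (\<lambda>_. borel) Y UNIV" unfolding Y_def by (rule Y_indep[OF L ind])
  have pn: "\<And>h. 0 \<le> phi lam h" using lam by (intro phi_nonneg) simp
  have pw: "ennreal (phi lam (Hlab L (Suc k) i (\<lambda>x. \<xi> x \<omega>)))
      \<le> ennreal (1/lam) * (\<Sum>a\<in>C. Y a \<omega>) + ennreal lam * (\<Sum>S\<in>P2. \<Prod>a\<in>S. Y a \<omega>)" for \<omega>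
  proof -
    have "ennreal (phi lam (Hlab L (Suc k) i (\<lambda>x. \<xi> x \<omega>)))
      \<le> ennreal ((\<Sum>a\<in>C. phi lam (Hlab L k a (\<lambda>x. \<xi> x \<omega>))) / lam
     + lam * (\<Sum>S\<in>P2. \<Prod>a\<in>S. phi lam (Hlab L k a (\<lambda>x. \<xi> x \<omega>))))"
      unfolding C_def P2_def by (rule ennreal_leI, rule pointwise[OF lam])
    also have "\<dots> = ennreal (1/lam) * (\<Sum>a\<in>C. Y a \<omega>) + ennreal lam * (\<Sum>S\<in>P2. \<Prod>a\<in>S. Y a \<omega>)"
      using pn lam unfolding Y_def
      by (simp add: sum_ennreal prod_ennreal ennreal_mult'[symmetric] ennreal_plus[symmetric]
            sum_nonneg prod_nonneg divide_nonneg_pos ennreal_mult[symmetric] field_simps)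
    finally show ?thesis .
  qed
  have "(\<integral>\<^sup>+\<omega>. ennreal (phi lam (Hlab L (Suc k) i (\<lambda>x. \<xi> x \<omega>))) \<partial>M)
     \<le> (\<integral>\<^sup>+\<omega>. ennreal (1/lam) * (\<Sum>a\<in>C. Y a \<omega>) + ennreal lam * (\<Sum>S\<in>P2. \<Prod>a\<in>S. Y a \<omega>) \<partial>M)"
    by (intro nn_integral_mono pw)
  also have "\<dots> = ennreal (1/lam) * (\<Sum>a\<in>C. \<integral>\<^sup>+\<omega>. Y a \<omega> \<partial>M) + ennreal lam * (\<Sum>S\<in>P2. \<integral>\<^sup>+\<omega>. (\<Prod>a\<in>S. Y a \<omega>) \<partial>M)"
    using Ym by (simp add: nn_integral_add nn_integral_cmult nn_integral_sum)
  also have "(\<Sum>S\<in>P2. \<integral>\<^sup>+\<omega>. (\<Prod>a\<in>S. Y a \<omega>) \<partial>M) = (\<Sum>S\<in>P2. \<Prod>a\<in>S. \<integral>\<^sup>+\<omega>. Y a \<omega> \<partial>M)"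
  proof (rule sum.cong)
    fix S assume "S \<in> P2"
    then have "finite S" using finC by (auto simp: P2_def intro: finite_subset)
    then show "(\<integral>\<^sup>+\<omega>. (\<Prod>a\<in>S. Y a \<omega>) \<partial>M) = (\<Prod>a\<in>S. \<integral>\<^sup>+\<omega>. Y a \<omega> \<partial>M)"
      by (intro indep_vars_nn_integral indep_vars_subset[OF Yi]) auto
  qed simp
  also have "ennreal (1/lam) * (\<Sum>a\<in>C. \<integral>\<^sup>+\<omega>. Y a \<omega> \<partial>M) + ennreal lam * (\<Sum>S\<in>P2. \<Prod>a\<in>S. \<integral>\<^sup>+\<omega>. Y a \<omega> \<partial>M)
      \<le> ennreal (1/lam) * (\<Sum>a\<in>C. ennreal e) + ennreal lam * (\<Sum>S\<in>P2. \<Prod>a\<in>S. ennreal e)"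
    using IH unfolding Y_def
    by (intro add_mono mult_left_mono sum_mono prod_mono_ennreal) auto
  also have "\<dots> = ennreal (real L * e / lam + lam * (\<Sum>S\<in>P2. e ^ card S))"
  proof -
    have "(\<Sum>a\<in>C. ennreal e) = ennreal (\<Sum>a\<in>C. e)" using e by (rule sum_ennreal)
    also have "\<dots> = ennreal (real L * e)" using cardC by simp
    finally have a: "ennreal (1/lam) * (\<Sum>a\<in>C. ennreal e) = ennreal (real L * e / lam)"
      using e lam by (simp add: ennreal_mult[symmetric])
    have "(\<Sum>S\<in>P2. \<Prod>a\<in>S. ennreal e) = (\<Sum>S\<in>P2. ennreal (e ^ card S))"
      using e by (simp add: ennreal_power)
    also have "\<dots> = ennreal (\<Sum>S\<in>P2. e ^ card S)" using e by (intro sum_ennreal) simp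
    finally have b: "ennreal lam * (\<Sum>S\<in>P2. \<Prod>a\<in>S. ennreal e) = ennreal (lam * (\<Sum>S\<in>P2. e ^ card S))"
      using e lam by (simp add: ennreal_mult[symmetric] sum_nonneg)
    show ?thesis unfolding a b using e lam
      by (subst ennreal_plus[symmetric]) (auto intro!: mult_nonneg_nonneg sum_nonneg divide_nonneg_pos)
  qed
  finally show ?thesis by (simp add: P2_def C_def)
qed

end


lemma sumP2:
  fixes e :: real
  assumes "finite C"
  shows "(\<Sum>S\<in>{S\<in>Pow C. 2 \<le> card S}. e ^ card S) = (1 + e) ^ card C - 1 - real (card C) * e"
proof -
  define P2 where "P2 = {S\<in>Pow C. 2 \<le> card S}"
  define Q where "Q = {S\<in>Pow C. card S < 2}"
  have PU: "Pow C = P2 \<union> Q" and disj: "P2 \<inter> Q = {}" by (auto simp: P2_def Q_def)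
  have fP: "finite P2" "finite Q" using assms by (auto simp: P2_def Q_def)
  have Qeq: "Q = insert {} ((\<lambda>a. {a}) ` C)"
  proof (intro set_eqI iffI)
    fix S assume "S \<in> Q"
    then have S: "S \<subseteq> C" "card S < 2" by (auto simp: Q_def)
    then have fS: "finite S" using assms finite_subset by blast
    show "S \<in> insert {} ((\<lambda>a. {a}) ` C)"
    proof (cases "card S")
      case 0 then show ?thesis using fS by simp
    next
      case (Suc n) then have "card S = 1" using S by simp
      then obtain a where "S = {a}" by (rule card_1_singletonE)
      then show ?thesis using S by auto
    qed
  qed (auto simp: Q_def)
  have "(\<Sum>S\<in>Q. e ^ card S) = 1 + real (card C) * e"
  proof -
    have "{} \<notin> (\<lambda>a. {a}) ` C" by auto
    then have "(\<Sum>S\<in>Q. e ^ card S) = 1 + (\<Sum>S\<in>(\<lambda>a. {a}) ` C. e ^ card S)"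
      unfolding Qeq using assms by (subst sum.insert) auto
    also have "(\<Sum>S\<in>(\<lambda>a. {a}) ` C. e ^ card S) = (\<Sum>a\<in>C. e)"
      by (subst sum.reindex) (auto simp: inj_on_def)
    finally show ?thesis by simp
  qed
  moreover have "(1 + e) ^ card C = (\<Sum>S\<in>Pow C. e ^ card S)"
    using prod_add[OF assms, of "\<lambda>_. e" "\<lambda>_. 1"] by (simp add: add.commute)
  moreover have "(\<Sum>S\<in>Pow C. e ^ card S) = (\<Sum>S\<in>P2. e ^ card S) + (\<Sum>S\<in>Q. e ^ card S)"
    unfolding PU using fP disj by (rule sum.union_disjoint)
  ultimately show ?thesis unfolding P2_def by simp
qed

lemma pow_bound:
  fixes e :: real
  assumes "0 \<le> e" "real n * e \<le> 1"
  shows "(1 + e) ^ n \<le> 1 + real n * e + (real n * e)^2"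
  using assms(2)
proof (induction n)
  case 0 then show ?case by simp
next
  case (Suc n)
  have ne: "real n * e \<le> 1" using Suc.prems assms(1) by (simp add: algebra_simps)
  have "(1 + e) ^ Suc n \<le> (1 + real n * e + (real n * e)^2) * (1 + e)"
    using Suc.IH[OF ne] assms(1) by (simp add: mult_right_mono)
  also have "\<dots> \<le> 1 + real (Suc n) * e + (real (Suc n) * e)^2"
  proof -
    have "real n * real n * e * e * e \<le> (real n + 1) * e * e"
    proof -
      have "real n * e * (real n * e * e) \<le> 1 * (real n * e * e)"
        using ne assms(1) by (intro mult_right_mono) auto
      also have "\<dots> \<le> (real n + 1) * e * e" using assms(1) by (simp add: mult_right_mono algebra_simps)
      finally show ?thesis by (simp add: algebra_simps)
    qed
    then show ?thesis by (simp add: algebra_simps power2_eq_square)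
  qed
  finally show ?case .
qed

context prob_space begin

lemma base:
  assumes rv: "\<And>i. \<xi> i \<in> measurable M (count_space UNIV)"
    and tail: "\<And>i n. measure M {\<omega> \<in> space M. \<xi> i \<omega> \<ge> n} = \<rho> ^ n"
    and lam: "1 \<le> lam" and q: "lam * \<rho> \<le> 1/2" and rho: "0 \<le> \<rho>"
  shows "(\<integral>\<^sup>+\<omega>. ennreal (phi lam (Hlab L 0 a (\<lambda>x. \<xi> x \<omega>))) \<partial>M) \<le> ennreal (2 * (lam * \<rho>))"
proof -
  define q where "q = lam * \<rho>"
  have q0: "0 \<le> q" using lam rho by (simp add: q_def)
  define A where "A m = {\<omega> \<in> space M. Suc m \<le> \<xi> a \<omega>}" for m
  have Am: "A m \<in> sets M" for m
    unfolding A_def using rv[of a] by measurable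
  have pw: "ennreal (phi lam (Hlab L 0 a (\<lambda>x. \<xi> x \<omega>))) \<le> (\<Sum>m. ennreal (lam ^ Suc m) * indicator (A m) \<omega>)"
    if w: "\<omega> \<in> space M" for \<omega>
  proof (cases "\<xi> a \<omega> = 0")
    case True then show ?thesis by (simp add: phi_def)
  next
    case False
    then obtain m where m: "\<xi> a \<omega> = Suc m" using not0_implies_Suc by blast
    have "ennreal (phi lam (Hlab L 0 a (\<lambda>x. \<xi> x \<omega>))) = ennreal (lam ^ Suc m) * indicator (A m) \<omega>"
      using m w by (simp add: phi_def A_def nat_add_distrib)
    also have "\<dots> = (\<Sum>j\<in>{m}. ennreal (lam ^ Suc j) * indicator (A j) \<omega>)" by (simp only: sum.insert sum.empty finite.emptyI empty_iff not_False_eq_True add_0_right)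
    also have "\<dots> \<le> (\<Sum>j. ennreal (lam ^ Suc j) * indicator (A j) \<omega>)"
      by (rule sum_le_suminf) auto
    finally show ?thesis .
  qed
  have "(\<integral>\<^sup>+\<omega>. ennreal (phi lam (Hlab L 0 a (\<lambda>x. \<xi> x \<omega>))) \<partial>M)
      \<le> (\<integral>\<^sup>+\<omega>. (\<Sum>m. ennreal (lam ^ Suc m) * indicator (A m) \<omega>) \<partial>M)"
    by (intro nn_integral_mono pw)
  also have "\<dots> = (\<Sum>m. \<integral>\<^sup>+\<omega>. ennreal (lam ^ Suc m) * indicator (A m) \<omega> \<partial>M)"
    using Am by (intro nn_integral_suminf) auto
  also have "\<dots> = (\<Sum>m. ennreal (q ^ Suc m))"
  proof (rule suminf_cong)
    fix m
    have "emeasure M (A m) = ennreal (\<rho> ^ Suc m)"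
      using tail[of "Suc m" a] Am by (simp add: emeasure_eq_measure A_def)
    then show "(\<integral>\<^sup>+\<omega>. ennreal (lam ^ Suc m) * indicator (A m) \<omega> \<partial>M) = ennreal (q ^ Suc m)"
      using Am lam rho by (simp add: nn_integral_cmult_indicator ennreal_mult[symmetric] q_def power_mult_distrib)
  qed
  also have "\<dots> = ennreal (q / (1 - q))"
  proof (rule suminf_ennreal_eq)
    show "0 \<le> q ^ Suc m" for m using q0 by simp
    have "(\<lambda>m. q ^ m) sums (1 / (1 - q))" using q q0 unfolding q_def by (intro geometric_sums) auto
    from sums_mult[OF this, of q] show "(\<lambda>m. q ^ Suc m) sums (q / (1 - q))" by simp
  qed
  also have "\<dots> \<le> ennreal (2 * q)"
    using q q0 unfolding q_def[symmetric] by (intro ennreal_leI) (simp add: field_simps mult_left_le)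
  finally show ?thesis by (simp add: q_def)
qed

end


lemma num_step:
  fixes u :: real
  assumes u: "0 < u" "u \<le> 1/2"
  shows "(1/u) * u^(k+8) / (1/u)^3 + (1/u)^3 * ((1/u) * u^(k+8))^2 \<le> u^(k+9)"
proof -
  have p8: "u^(k+8) = u * u^(k+7)" by (subst power_Suc[symmetric]) (simp add: add.commute)
  have a: "(1/u) * u^(k+8) = u^(k+7)" using u unfolding p8 by (simp add: field_simps)
  have b: "u^(k+7) / (1/u)^3 = u^(k+9) * u"
  proof -
    have "u^(k+7) / (1/u)^3 = u^(k+7) * u^3" using u by (simp add: power_one_over)
    also have "\<dots> = u^(k+9) * u" by (simp only: power_add[symmetric] power_Suc2[symmetric]) (rule arg_cong[where f="(^) u"], simp)
    finally show ?thesis .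
  qed
  have c: "(1/u)^3 * (u^(k+7))^2 = u^(k+9) * u^(k+2)"
  proof -
    have "(u^(k+7))^2 = u^3 * (u^(k+9) * u^(k+2))"
      by (simp only: power_add[symmetric] power_mult[symmetric] mult.assoc[symmetric]) (rule arg_cong[where f="(^) u"], simp)
    then show ?thesis using u by (simp add: power_one_over)
  qed
  have d: "u^(k+2) \<le> u"
  proof -
    have "u^(k+2) = u * u^(k+1)" by (subst power_Suc[symmetric]) (simp add: add.commute)
    also have "\<dots> \<le> u * 1" using u by (intro mult_left_mono power_le_one) auto
    finally show ?thesis by simp
  qed
  have "u^(k+9) * u + u^(k+9) * u^(k+2) \<le> u^(k+9) * 1"
  proof -
    have "u + u^(k+2) \<le> 1" using d u by linarith
    then have "u^(k+9) * (u + u^(k+2)) \<le> u^(k+9) * 1" using u by (intro mult_left_mono) auto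
    then show ?thesis by (simp add: distrib_left)
  qed
  then show ?thesis unfolding a b c by simp
qed



lemma num_base:
  fixes u \<rho> :: real
  assumes u: "0 < u" "u \<le> 1/2" and r: "0 \<le> \<rho>" "\<rho> \<le> u^16"
  shows "(1/u)^3 * \<rho> \<le> 1/2" "2 * ((1/u)^3 * \<rho>) \<le> u^8"
proof -
  have "(1/u)^3 * \<rho> \<le> (1/u)^3 * u^16" using r u by (intro mult_left_mono) auto
  also have "\<dots> = u^13"
  proof -
    have e: "u^16 = u^3 * u^13" by (simp only: power_add[symmetric]) (rule arg_cong[where f="(^) u"], simp)
    have "(1/u)^3 * (u^3 * u^13) = ((1/u) * u)^3 * u^13"
      by (simp only: mult.assoc[symmetric] power_mult_distrib[symmetric])
    also have "\<dots> = u^13" using u by simp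
    finally show ?thesis unfolding e .
  qed
  finally have q: "(1/u)^3 * \<rho> \<le> u^13" .
  have u13: "u^13 = u^8 * u^5" by (simp only: power_add[symmetric]) (rule arg_cong[where f="(^) u"], simp)
  have u5: "u^5 \<le> (1/2)^5" using u by (intro power_mono) auto
  have "2 * u^13 \<le> u^8"
  proof -
    have t: "2 * u^5 \<le> 1"
    proof -
      from u5 have "u^5 \<le> 1/32" by (simp add: power_one_over)
      then show ?thesis by linarith
    qed
    have "u^8 * (2 * u^5) \<le> u^8 * 1" using u t by (intro mult_left_mono) auto
    then show ?thesis unfolding u13 by (simp add: algebra_simps)
  qed
  then show "2 * ((1/u)^3 * \<rho>) \<le> u^8" using q by linarith
  have "u^8 \<le> 1" using u by (intro power_le_one) auto
  then show "(1/u)^3 * \<rho> \<le> 1/2" using q \<open>2 * u^13 \<le> u^8\<close> by linarith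
qed

context prob_space begin

lemma bound_all:
  assumes rv: "\<And>i. \<xi> i \<in> measurable M (count_space UNIV)"
    and ind: "indep_vars (\<lambda>_. count_space UNIV) \<xi> UNIV"
    and tail: "\<And>i n. measure M {\<omega> \<in> space M. \<xi> i \<omega> \<ge> n} = \<rho> ^ n"
    and L2: "2 \<le> L" and rho: "0 \<le> \<rho>" "\<rho> \<le> (1/real L)^16"
  shows "(\<integral>\<^sup>+\<omega>. ennreal (phi (real L^3) (Hlab L k a (\<lambda>x. \<xi> x \<omega>))) \<partial>M) \<le> ennreal ((1/real L)^(k+8))"
proof (induction k arbitrary: a)
  define u where "u = 1/real L"
  have u: "0 < u" "u \<le> 1/2" using L2 by (auto simp: u_def field_simps)
  have Lu: "real L = 1/u" using L2 by (simp add: u_def)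
  have lam: "1 \<le> real L^3" using L2 by simp
  case 0
  have r: "\<rho> \<le> u^16" using rho by (simp add: u_def)
  have nb: "real L^3 * \<rho> \<le> 1/2" "2 * (real L^3 * \<rho>) \<le> u^8"
    using num_base[OF u rho(1) r] unfolding Lu by auto
  have "(\<integral>\<^sup>+\<omega>. ennreal (phi (real L^3) (Hlab L 0 a (\<lambda>x. \<xi> x \<omega>))) \<partial>M) \<le> ennreal (2 * (real L^3 * \<rho>))"
    by (rule base[OF rv tail lam nb(1) rho(1)])
  also have "\<dots> \<le> ennreal (u^8)" using nb(2) by (rule ennreal_leI)
  finally show ?case by (simp add: u_def)
next
  define u where "u = 1/real L"
  have u: "0 < u" "u \<le> 1/2" using L2 by (auto simp: u_def field_simps)
  have Lu: "real L = 1/u" using L2 by (simp add: u_def)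
  have lam: "1 \<le> real L^3" using L2 by simp
  case (Suc k)
  define e where "e = u^(k+8)"
  have e0: "0 \<le> e" using u by (simp add: e_def)
  have IH: "\<And>a. (\<integral>\<^sup>+\<omega>. ennreal (phi (real L^3) (Hlab L k a (\<lambda>x. \<xi> x \<omega>))) \<partial>M) \<le> ennreal e"
    using Suc.IH by (simp add: e_def u_def)
  define C where "C = {a * int L ..< a * int L + int L}"
  have cC: "card C = L" "finite C" by (auto simp: C_def)
  have Le: "real L * e \<le> 1"
  proof -
    have p8: "u^(k+8) = u * u^(k+7)" by (subst power_Suc[symmetric]) (simp add: add.commute)
    have "real L * e = u^(k+7)" unfolding e_def Lu p8 using u by simp
    also have "\<dots> \<le> 1" using u by (intro power_le_one) auto
    finally show ?thesis .
  qed
  have S: "(\<Sum>S\<in>{S\<in>Pow C. 2 \<le> card S}. e ^ card S) \<le> (real L * e)^2"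
    using sumP2[OF cC(2), of e] pow_bound[OF e0, of L] Le cC(1) by simp
  have "(\<integral>\<^sup>+\<omega>. ennreal (phi (real L^3) (Hlab L (Suc k) a (\<lambda>x. \<xi> x \<omega>))) \<partial>M)
     \<le> ennreal (real L * e / real L^3 + real L^3 * (\<Sum>S\<in>{S\<in>Pow C. 2 \<le> card S}. e ^ card S))"
    unfolding C_def using L2 lam e0 IH by (intro step[OF rv ind]) auto
  also have "\<dots> \<le> ennreal (real L * e / real L^3 + real L^3 * (real L * e)^2)"
    using S lam by (intro ennreal_leI add_left_mono mult_left_mono) auto
  also have "\<dots> \<le> ennreal (u^(k+9))"
    using num_step[OF u, of k] unfolding Lu e_def by (intro ennreal_leI) simp
  finally show ?case by (simp add: u_def add.commute)
qed

end


theorem lemma3p1: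
  fixes M :: "'a measure" and \<xi> :: "int \<Rightarrow> 'a \<Rightarrow> nat" and \<rho> :: real and L :: nat
  assumes "prob_space M"
    and "L = 10^6"
    and "\<rho> \<le> real L powr (-16)"
    and "\<And>i. \<xi> i \<in> measurable M (count_space UNIV)"
    and "prob_space.indep_vars M (\<lambda>_. count_space UNIV) \<xi> UNIV"
    and "\<And>i n. measure M {\<omega> \<in> space M. \<xi> i \<omega> \<ge> n} = \<rho> ^ n"
  shows "\<forall>k. measure M {\<omega> \<in> space M. bad L k 0 (\<lambda>i. \<xi> i \<omega>)} \<le> real L powr (- real k / 2)"
proof
  fix k
  interpret prob_space M by (rule assms(1))
  have L2: "2 \<le> L" using assms(2) by simp
  have Lpos: "0 < real L" using L2 by simp
  have rho0: "0 \<le> \<rho>"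
    using assms(6)[of 1 0] measure_nonneg[of M "{\<omega> \<in> space M. 1 \<le> \<xi> 0 \<omega>}"] by simp
  have pw: "real L powr (- real n) = (1 / real L)^n" for n :: nat
    using Lpos by (simp add: powr_minus_divide powr_realpow power_one_over)
  have rho1: "\<rho> \<le> (1 / real L)^16"
    using assms(3) pw[of 16] by simp
  define lam where "lam = real L ^ 3"
  have lam1: "1 \<le> lam" using L2 by (simp add: lam_def)
  define A where "A = {\<omega> \<in> space M. bad L k 0 (\<lambda>i. \<xi> i \<omega>)}"
  have "A = (\<lambda>\<omega>. Hlab L k 0 (\<lambda>x. \<xi> x \<omega>)) -` (UNIV - {0}) \<inter> space M"
    by (auto simp: A_def bad_def)
  then have Am: "A \<in> sets M" using measurable_sets[OF H_rv[OF assms(4)], of "UNIV - {0}" L k 0] by simp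
  have ind: "indicator A \<omega> \<le> ennreal (phi lam (Hlab L k 0 (\<lambda>x. \<xi> x \<omega>)))" for \<omega>
  proof (cases "\<omega> \<in> A")
    case True
    then have "Hlab L k 0 (\<lambda>x. \<xi> x \<omega>) \<noteq> 0" by (simp add: A_def bad_def)
    then have "1 \<le> Hlab L k 0 (\<lambda>x. \<xi> x \<omega>)" using Hlab_nonneg[of L k 0 "\<lambda>x. \<xi> x \<omega>"] by simp
    then show ?thesis using True lam1 by (simp add: phi_def one_le_power)
  qed simp
  have "emeasure M A = (\<integral>\<^sup>+\<omega>. indicator A \<omega> \<partial>M)" using Am by simp
  also have "\<dots> \<le> (\<integral>\<^sup>+\<omega>. ennreal (phi lam (Hlab L k 0 (\<lambda>x. \<xi> x \<omega>))) \<partial>M)"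
    by (intro nn_integral_mono ind)
  also have "\<dots> \<le> ennreal ((1/real L)^(k+8))"
    unfolding lam_def by (rule bound_all[OF assms(4) assms(5) assms(6) L2 rho0 rho1])
  finally have "measure M A \<le> (1/real L)^(k+8)"
    using Am by (simp add: emeasure_eq_measure ennreal_le_iff)
  also have "\<dots> \<le> (1/real L)^k" using L2 by (intro power_decreasing) auto
  also have "\<dots> = real L powr (- real k)" using pw by simp
  also have "\<dots> \<le> real L powr (- real k / 2)" using L2 by (intro powr_mono) auto
  finally show "measure M {\<omega> \<in> space M. bad L k 0 (\<lambda>i. \<xi> i \<omega>)} \<le> real L powr (- real k / 2)"
    by (simp add: A_def)
qed


end
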